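(* For every $\psi \in L^1(\mathbb{R}_+^{\times})$, $f \in L^{\infty}(\mathbb{R}_+^{\times})$ and $\omega \in \Omega^*$, \[(U_{\psi}f)^{\times}_{\omega}(x) = (f^{\times}_{\omega} * \tilde{\psi})(x) \quad\text{for every } x \in \mathbb{R}^{\times},\] where $\tilde{\psi}\in L^1(\mathbb{R}^\times)$ equals $\psi$ on $[1,\infty)$ and $0$ on $(0,1)$.
   Context: $\mathbb{R}^\times = (0,\infty)$ with measure $dt/t$, $\mathbb{R}_+^\times = [1,\infty)$; functions are complex-valued. $(U_\psi f)(x) = \int_1^x f(t)\psi(x/t)\,\frac{dt}{t}$. Convolution on $\mathbb{R}^\times$: $(g*h)(x) = \int_0^\infty g(x/t)h(t)\,\frac{dt}{t}$. Let $\beta\mathbb{N}$ be the Stone–Čech compactification of $\mathbb{N}$, $\mathbb{N}^* = \beta\mathbb{N}\setminus\mathbb{N}$, $\tau$ the continuous extension of $n\mapsto n+1$ to $\beta\mathbb{N}$. $\Omega$ is the quotient of $\beta\mathbb{N}\times[0,1]$ identifying $(\eta,1)$ with $(\tau\eta,0)$; $\Omega^*$ is the set of classes $(\eta,u)$ with $\eta\in\mathbb{N}^*$; $\tau^s(\eta,u) = (\tau^{[u+s]}\eta, u+s-[u+s])$ for $s\in\mathbb{R}$. Each $\omega=(\eta,u)$ is identified with the ultrafilter on $[0,\infty)$ generated by $\{u+A: A\in\eta\}$. For $g\in L^\infty(\mathbb{R}_+^\times)$, $g^\times_\omega := \omega\text{-}\lim_s g(e^s\,\cdot)$, limit in the weak*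 topology of $L^\infty(\mathbb{R}_+^\times)$ (with respect to $dt/t$), extended to an element of $L^\infty(\mathbb{R}^\times)$ by $g^\times_\omega(x) = g^\times_{\tau^{-N}\omega}(e^N x)$ for $x\in[e^{-N},1]$, $N>0$. *)

theory Defs
  imports "HOL-Analysis.Analysis"
begin

text \<open>Measure dt/t on the multiplicative group (0,\<infinity>) (functions on the reals;
  values outside (0,\<infinity>) are irrelevant).\<close>
definition haar :: "real measure" where
  "haar = density lborel (\<lambda>t. ennreal (indicator {0<..} t / t))"

definition haar1 :: "real measure" where
  "haar1 = density lborel (\<lambda>t. ennreal (indicator {1..} t / t))"

definition Linf1 :: "(real \<Rightarrow> complex) \<Rightarrow> bool" where
  "Linf1 g \<longleftrightarrow> g \<in> borel_measurable borel \<and> (\<exists>C. AE t in haar1. norm (g t) \<le> C)"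

definition U_op :: "(real \<Rightarrow> complex) \<Rightarrow> (real \<Rightarrow> complex) \<Rightarrow> real \<Rightarrow> complex" where
  "U_op \<psi> f x = (LINT t|haar1. indicator {..x} t * f t * \<psi> (x / t))"

definition psi_tilde :: "(real \<Rightarrow> complex) \<Rightarrow> real \<Rightarrow> complex" where
  "psi_tilde \<psi> t = (if 1 \<le> t then \<psi> t else 0)"

definition mconv :: "(real \<Rightarrow> complex) \<Rightarrow> (real \<Rightarrow> complex) \<Rightarrow> real \<Rightarrow> complex" where
  "mconv g h x = (LINT t|haar. g (x / t) * h t)"

text \<open>Points of \<beta>\<nat> are ultrafilters on nat; points of \<nat>* are the free ones.\<close>
definition is_ultrafilter :: "'a filter \<Rightarrow> bool" where
  "is_ultrafilter F \<longleftrightarrow> F \<noteq> bot \<and> (\<forall>P. eventually P F \<or> eventually (\<lambda>x. \<not> P x) F)"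

definition free_uf :: "nat filter \<Rightarrow> bool" where
  "free_uf \<eta> \<longleftrightarrow> is_ultrafilter \<eta> \<and> (\<forall>n. \<not> eventually (\<lambda>m. m = n) \<eta>)"

text \<open>Integer powers of \<tau> (continuous extension of n \<mapsto> n+1); tau is the image
  filter under Suc. For negative exponents this is the inverse of \<tau> on \<nat>*
  (the only place where it is used).\<close>
definition tau_pow :: "int \<Rightarrow> nat filter \<Rightarrow> nat filter" where
  "tau_pow k \<eta> = filtermap (\<lambda>n. nat (int n + k)) \<eta>"

text \<open>A point of \<Omega>* is represented by its unique representative (\<eta>,u) with
  \<eta> free and 0 \<le> u < 1. The flow \<tau>^s:\<close>
definition tau_s :: "real \<Rightarrow> nat filter \<times> real \<Rightarrow> nat filter \<times> real" where
  "tau_s s \<omega> = (tau_pow \<lfloor>snd \<omega> + s\<rfloor> (fst \<omega>), snd \<omega> + s - of_int \<lfloor>snd \<omega> + s\<rfloor>)"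

definition omega_filter :: "nat filter \<times> real \<Rightarrow> real filter" where
  "omega_filter \<omega> = filtermap (\<lambda>n. snd \<omega> + real n) (fst \<omega>)"

text \<open>h is a representative of g^\<times>_\<omega> \<in> L\<infinity>([1,\<infinity>)): the \<omega>-limit of
  s \<mapsto> g(e^s \<cdot>) in the weak* topology of L\<infinity>([1,\<infinity>), dt/t) = L1([1,\<infinity>), dt/t)*.\<close>
definition wlim_rep :: "(real \<Rightarrow> complex) \<Rightarrow> nat filter \<times> real \<Rightarrow> (real \<Rightarrow> complex) \<Rightarrow> bool" where
  "wlim_rep g \<omega> h \<longleftrightarrow> Linf1 h \<and>
     (\<forall>\<phi>::real \<Rightarrow> complex. integrable haar1 \<phi> \<longrightarrow>
        ((\<lambda>s. LINT t|haar1. g (exp s * t) * \<phi> t) \<longlongrightarrow> (LINT t|haar1. h t * \<phi> t))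
          (omega_filter \<omega>))"

text \<open>F is a representative of the extension of g^\<times>_\<omega> to an element of
  L\<infinity>(\<real>^\<times>): F = g^\<times>_\<omega> on [1,\<infinity>) and F(x) = g^\<times>_{\<tau>^{-N}\<omega>}(e^N x) on [e^{-N},1]
  (almost everywhere, as elements of L\<infinity>).\<close>
definition ext_rep :: "(real \<Rightarrow> complex) \<Rightarrow> nat filter \<times> real \<Rightarrow> (real \<Rightarrow> complex) \<Rightarrow> bool" where
  "ext_rep g \<omega> F \<longleftrightarrow> F \<in> borel_measurable borel \<and>
     (\<exists>h. wlim_rep g \<omega> h \<and> (AE x in haar. 1 \<le> x \<longrightarrow> F x = h x)) \<and>
     (\<forall>N::nat. N > 0 \<longrightarrow>
        (\<exists>G. wlim_rep g (tau_s (- real N) \<omega>) G \<and>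
             (AE x in haar. exp (- real N) \<le> x \<and> x \<le> 1 \<longrightarrow> F x = G (exp (real N) * x))))"

end

theory Submission
  imports Defs
begin


lemma nn_exp_subst_n:
  assumes A: "A \<in> sets borel"
  shows "(\<integral>\<^sup>+x. ennreal (indicator A x / x * indicator {exp (- real n)..exp (real n)} x) \<partial>lborel) =
         (\<integral>\<^sup>+x. ennreal (indicator A (exp x) * indicator {- real n..real n} x) \<partial>lborel)"
proof -
  have "(\<integral>\<^sup>+x. ennreal ((\<lambda>x. indicator A x / x) x * indicator {exp (- real n)..exp (real n)} x) \<partial>lborel) =
        (\<integral>\<^sup>+x. ennreal ((\<lambda>x. indicator A x / x) (exp x) * exp x * indicator {- real n..real n} x) \<partial>lborel)"
    by (rule nn_integral_substitution[where g=exp and g'=exp])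
       (use A in \<open>auto intro!: derivative_eq_intros continuous_intros simp: set_borel_measurable_def\<close>)
  also have "\<dots> = (\<integral>\<^sup>+x. ennreal (indicator A (exp x) * indicator {- real n..real n} x) \<partial>lborel)"
    by (intro nn_integral_cong) (simp add: field_simps)
  finally show ?thesis by simp
qed

lemma SUP_ind_n1: "(SUP n. ennreal (indicator {- real n..real n} (x::real))) = 1"
proof (rule antisym)
  show "(SUP n. ennreal (indicator {- real n..real n} x)) \<le> 1"
    by (rule SUP_least) (simp split: split_indicator)
  obtain n :: nat where "\<bar>x\<bar> \<le> real n" using real_arch_simple[of "\<bar>x\<bar>"] by auto
  hence "x \<in> {- real n..real n}" by (simp add: abs_le_iff)
  hence eq: "ennreal (indicator {- real n..real n} x) = 1" by simp
  show "1 \<le> (SUP n. ennreal (indicator {- real n..real n} x))"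
    by (rule SUP_upper2[where i=n]) (use eq in simp_all)
qed

lemma SUP_ind_n2:
  "(SUP n. ennreal (indicator A x / x * indicator {exp (- real n)..exp (real n)} (x::real)))
     = ennreal (indicator {0<..} x / x * indicator A x)"
proof (cases "x > 0")
  case True
  show ?thesis
  proof (rule antisym)
    show "(SUP n. ennreal (indicator A x / x * indicator {exp (- real n)..exp (real n)} x)) \<le> ennreal (indicator {0<..} x / x * indicator A x)"
    proof (rule SUP_least, rule ennreal_leI)
      fix n :: nat
      show "indicator A x / x * indicator {exp (- real n)..exp (real n)} x \<le> indicator {0<..} x / x * indicator A x"
        using True by (cases "x \<in> A"; cases "x \<in> {exp (- real n)..exp (real n)}") simp_all
    qed
    obtain n :: nat where n: "\<bar>ln x\<bar> \<le> real n" using real_arch_simple[of "\<bar>ln x\<bar>"] by auto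
    have n1: "- real n \<le> ln x" "ln x \<le> real n" using n by linarith+
    have "exp (- real n) \<le> exp (ln x)" using n1(1) by simp
    then have "exp (- real n) \<le> x" using True by simp
    moreover have "exp (ln x) \<le> exp (real n)" using n1(2) by simp
    then have "x \<le> exp (real n)" using True by simp
    ultimately have eq: "ennreal (indicator A x / x * indicator {exp (- real n)..exp (real n)} x) = ennreal (indicator {0<..} x / x * indicator A x)"
      using True by simp
    show "ennreal (indicator {0<..} x / x * indicator A x) \<le> (SUP n. ennreal (indicator A x / x * indicator {exp (- real n)..exp (real n)} x))"
      by (rule SUP_upper2[where i=n]) (use eq in simp_all)
  qed
next
  case False
  have "\<And>n. x \<notin> {exp (- real n)..exp (real n)}"
  proof
    fix n assume "x \<in> {exp (- real n)..exp (real n)}"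
    then have "exp (- real n) \<le> x" by simp
    moreover have "0 < exp (- real n)" by simp
    ultimately show False using False by linarith
  qed
  then show ?thesis using False by simp
qed

lemma haar_distr: "haar = distr lborel borel exp"
proof (rule measure_eqI)
  show "sets haar = sets (distr lborel borel exp)" by (simp add: haar_def)
  fix A assume "A \<in> sets haar"
  then have A[measurable]: "A \<in> sets borel" by (simp add: haar_def)
  have E: "exp -` A \<in> sets borel" by (rule measurable_sets_borel[OF _ A]) simp
  have "emeasure (distr lborel borel exp) A = emeasure lborel (exp -` A)"
    by (subst emeasure_distr) auto
  also have "\<dots> = (\<integral>\<^sup>+x. indicator (exp -` A) x \<partial>lborel)"
    using E by (simp add: nn_integral_indicator)
  also have "\<dots> = (\<integral>\<^sup>+x. indicator A (exp x) \<partial>lborel)"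
    by (simp add: indicator_vimage)
  also have "\<dots> = (\<integral>\<^sup>+x. (SUP n. ennreal (indicator A (exp x) * indicator {- real n..real n} x)) \<partial>lborel)"
  proof (intro nn_integral_cong)
    fix x :: real
    have "(SUP n. ennreal (indicator A (exp x) * indicator {- real n..real n} x))
        = (SUP n. ennreal (indicator A (exp x)) * ennreal (indicator {- real n..real n} x))"
      by (simp add: ennreal_mult)
    also have "\<dots> = ennreal (indicator A (exp x)) * (SUP n. ennreal (indicator {- real n..real n} x))"
      by (simp add: SUP_mult_left_ennreal)
    also have "\<dots> = indicator A (exp x)" by (subst SUP_ind_n1) (simp add: ennreal_indicator)
    finally show "indicator A (exp x) = (SUP n. ennreal (indicator A (exp x) * indicator {- real n..real n} x))" ..
  qed
  also have "\<dots> = (SUP n. \<integral>\<^sup>+x. ennreal (indicator A (exp x) * indicator {- real n..real n} x) \<partial>lborel)"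
  proof (rule nn_integral_monotone_convergence_SUP)
    show "incseq (\<lambda>n x. ennreal (indicator A (exp x) * indicator {- real n..real n} x))"
    proof (intro incseq_SucI le_funI ennreal_leI)
      fix n x
      show "indicator A (exp x) * indicator {- real n..real n} x \<le> ( indicator A (exp x) * indicator {- real (Suc n)..real (Suc n)} (x::real) :: real)"
        by (cases "exp x \<in> A"; cases "x \<in> {- real n..real n}"; cases "x \<in> {- real (Suc n)..real (Suc n)}") simp_all
    qed
  qed simp
  also have "\<dots> = (SUP n. \<integral>\<^sup>+x. ennreal (indicator A x / x * indicator {exp (- real n)..exp (real n)} x) \<partial>lborel)"
    by (intro SUP_cong refl) (rule nn_exp_subst_n[OF A, symmetric])
  also have "\<dots> = (\<integral>\<^sup>+x. (SUP n. ennreal (indicator A x / x * indicator {exp (- real n)..exp (real n)} x)) \<partial>lborel)"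
  proof (rule nn_integral_monotone_convergence_SUP[symmetric])
    show "incseq (\<lambda>n x. ennreal (indicator A x / x * indicator {exp (- real n)..exp (real n)} x))"
    proof (intro incseq_SucI le_funI ennreal_leI)
      fix n x
      show "indicator A x / x * indicator {exp (- real n)..exp (real n)} x \<le> (indicator A x / x * indicator {exp (- real (Suc n))..exp (real (Suc n))} (x::real) :: real)"
      proof -
        have e: "exp (- (1 + real n)) \<le> exp (-real n)" "exp (real n) \<le> exp (1 + real n)" "0 < exp (- (1 + real n))" by simp_all
        let ?S = "{exp (- real n)..exp (real n)}" and ?S' = "{exp (- real (Suc n))..exp (real (Suc n))}"
        show ?thesis
        proof (cases "x \<in> ?S")
          case True
          then have "x \<in> ?S'" using e by (simp only: atLeastAtMost_iff of_nat_Suc) linarith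
          then show ?thesis using True by simp
        next
          case False
          have "0 \<le> indicator A x / x * indicator ?S' x"
          proof (cases "x \<in> ?S'")
            case True
            then have "0 \<le> x" using e by (simp only: atLeastAtMost_iff of_nat_Suc) linarith
            then show ?thesis by simp
          qed simp
          then show ?thesis using False by simp
        qed
      qed
    qed
  qed simp
  also have "\<dots> = (\<integral>\<^sup>+x. ennreal (indicator {0<..} x / x) * indicator A x \<partial>lborel)"
    by (intro nn_integral_cong, subst SUP_ind_n2) (auto simp: indicator_def)
  also have "\<dots> = emeasure haar A"
    by (simp add: haar_def emeasure_density)
  finally show "emeasure haar A = emeasure (distr lborel borel exp) A" ..
qed



lemma haar1_density: "haar1 = density haar (\<lambda>t. ennreal (indicator {1..} t))"
  unfolding haar1_def haar_def
  by (subst density_density_eq) (auto intro!: density_cong simp: ennreal_mult'[symmetric] split: split_indicator)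

lemma ind_exp_ge1: "(indicator {1..} (exp y) :: 'a::{zero_neq_one}) = indicator {0..} (y::real)"
  by (simp add: indicator_def)

lemma haar_integral:
  fixes g :: "real \<Rightarrow> complex"
  assumes [measurable]: "g \<in> borel_measurable borel"
  shows "integral\<^sup>L haar g = (LINT y|lborel. g (exp y))"
  by (simp add: haar_distr integral_distr)

lemma haar_integrable:
  fixes g :: "real \<Rightarrow> complex"
  assumes [measurable]: "g \<in> borel_measurable borel"
  shows "integrable haar g \<longleftrightarrow> integrable lborel (\<lambda>y. g (exp y))"
  by (simp add: haar_distr integrable_distr_eq)

lemma haar1_integral:
  fixes g :: "real \<Rightarrow> complex"
  assumes [measurable]: "g \<in> borel_measurable borel"
  shows "integral\<^sup>L haar1 g = (LINT y|lborel. indicator {0..} y * g (exp y))"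
proof -
  have "integral\<^sup>L haar1 g = integral\<^sup>L haar (\<lambda>t. indicator {1..} t *\<^sub>R g t)"
    unfolding haar1_density by (rule integral_density) (auto simp: haar_def)
  also have "\<dots> = (LINT y|lborel. indicator {1..} (exp y) *\<^sub>R g (exp y))"
    by (rule haar_integral) simp
  also have "\<dots> = (LINT y|lborel. indicator {0..} y * g (exp y))"
    by (simp add: scaleR_conv_of_real of_real_indicator ind_exp_ge1)
  finally show ?thesis .
qed

lemma haar1_integrable:
  fixes g :: "real \<Rightarrow> complex"
  assumes [measurable]: "g \<in> borel_measurable borel"
  shows "integrable haar1 g \<longleftrightarrow> integrable lborel (\<lambda>y. indicator {0..} y * g (exp y))"
proof -
  have "integrable haar1 g \<longleftrightarrow> integrable haar (\<lambda>t. indicator {1..} t *\<^sub>R g t)"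
    unfolding haar1_density by (rule integrable_density) (auto simp: haar_def)
  also have "\<dots> \<longleftrightarrow> integrable lborel (\<lambda>y. indicator {1..} (exp y) *\<^sub>R g (exp y))"
    by (rule haar_integrable) simp
  also have "\<dots> \<longleftrightarrow> integrable lborel (\<lambda>y. indicator {0..} y * g (exp y))"
    by (simp add: scaleR_conv_of_real of_real_indicator ind_exp_ge1)
  finally show ?thesis .
qed

lemma haar_AE:
  assumes [measurable]: "{x \<in> space borel. P x} \<in> sets borel"
  shows "(AE x in haar. P x) \<longleftrightarrow> (AE y in lborel. P (exp y))"
  unfolding haar_distr by (rule AE_distr_iff) simp_all

lemma haar1_AE:
  assumes [measurable]: "{x \<in> space borel. P x} \<in> sets borel"
  shows "(AE x in haar1. P x) \<longleftrightarrow> (AE y in lborel. 0 \<le> y \<longrightarrow> P (exp y))"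
proof -
  have "(AE x in haar1. P x) \<longleftrightarrow> (AE x in haar. 0 < ennreal (indicator {1..} x) \<longrightarrow> P x)"
    unfolding haar1_density by (rule AE_density) (simp add: haar_def)
  also have "\<dots> \<longleftrightarrow> (AE y in lborel. 0 < ennreal (indicator {1..} (exp y)) \<longrightarrow> P (exp y))"
    by (rule haar_AE) simp
  also have "\<dots> \<longleftrightarrow> (AE y in lborel. 0 \<le> y \<longrightarrow> P (exp y))"
    by (simp add: ind_exp_ge1 indicator_def)
  finally show ?thesis .
qed

lemma lborel_AE_shift:
  assumes [measurable]: "{x \<in> space borel. P x} \<in> sets borel"
    and "AE x in lborel. P (x::real)"
  shows "AE y in lborel. P (c + y)"
proof -
  have "AE x in distr lborel borel ((+) c). P x" using assms(2) by (simp only: lborel_distr_plus)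
  then show ?thesis by (subst (asm) AE_distr_iff) simp_all
qed

lemma lborel_integral_shift:
  fixes g :: "real \<Rightarrow> 'a::{banach, second_countable_topology}"
  shows "(LINT y|lborel. g y) = (LINT y|lborel. g (c + y))"
  using lborel_integral_real_affine[of 1 g c] by simp

lemma lborel_integral_reflect:
  fixes g :: "real \<Rightarrow> 'a::{banach, second_countable_topology}"
  shows "(LINT y|lborel. g y) = (LINT y|lborel. g (c - y))"
  using lborel_integral_real_affine[of "-1" g c] by simp

lemma lborel_integrable_shift:
  fixes g :: "real \<Rightarrow> 'a::{banach, second_countable_topology}"
  shows "integrable lborel (\<lambda>y. g (c + y)) \<longleftrightarrow> integrable lborel g"
  using lborel_integrable_real_affine_iff[of 1 g c] by simp

lemma lborel_integrable_reflect:
  fixes g :: "real \<Rightarrow> 'a::{banach, second_countable_topology}"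
  shows "integrable lborel (\<lambda>y. g (c - y)) \<longleftrightarrow> integrable lborel g"
  using lborel_integrable_real_affine_iff[of "-1" g c] by simp



lemma integrable_bdd_translate:
  fixes b p :: "real \<Rightarrow> complex"
  assumes [measurable]: "b \<in> borel_measurable borel"
    and bnd: "AE q in lborel. norm (b q) \<le> C" and C: "0 \<le> C"
    and p: "integrable lborel p"
  shows "integrable lborel (\<lambda>q. b q * p (t - q))"
proof -
  have pm[measurable]: "p \<in> borel_measurable borel" using borel_measurable_integrable[OF p] by simp
  have ip: "integrable lborel (\<lambda>q. p (t - q))" using p by (simp add: lborel_integrable_reflect)
  show ?thesis
  proof (rule Bochner_Integration.integrable_bound)
    show "integrable lborel (\<lambda>q. of_real C * p (t - q))" using ip by simp
    show "(\<lambda>q. b q * p (t - q)) \<in> borel_measurable lborel" by simp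
    show "AE q in lborel. norm (b q * p (t - q)) \<le> norm (of_real C * p (t - q))"
      using bnd by eventually_elim (use C in \<open>auto simp: norm_mult intro!: mult_right_mono\<close>)
  qed
qed

lemma conv_integrable:
  fixes b p k :: "real \<Rightarrow> complex"
  assumes [measurable]: "b \<in> borel_measurable borel"
    and bnd: "AE q in lborel. norm (b q) \<le> C" and C: "0 \<le> C"
    and p: "integrable lborel p" and k: "integrable lborel k"
  shows "integrable (lborel \<Otimes>\<^sub>M lborel) (\<lambda>(t,q). b q * p (t - q) * k t)"
proof -
  have pm[measurable]: "p \<in> borel_measurable borel" using borel_measurable_integrable[OF p] by simp
  have km[measurable]: "k \<in> borel_measurable borel" using borel_measurable_integrable[OF k] by simp
  define P where "P = (LINT q|lborel. norm (p q))"
  have int1: "integrable lborel (\<lambda>q. b q * p (t - q))" for t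
    by (rule integrable_bdd_translate[OF _ bnd C p]) simp
  have int1n: "integrable lborel (\<lambda>q. norm (b q) * norm (p (t - q)))" for t
    using integrable_norm[OF int1[of t]] by (simp add: norm_mult)
  have ipn: "integrable lborel (\<lambda>q. norm (p (t - q)))" for t
    using p by (simp add: lborel_integrable_reflect)
  have Pt: "(LINT q|lborel. norm (p (t - q))) = P" for t
    unfolding P_def by (rule lborel_integral_reflect[symmetric])
  have M: "(\<lambda>(t,q). b q * p (t - q) * k t) \<in> borel_measurable (lborel \<Otimes>\<^sub>M lborel)" by measurable
  have I2: "AE t in lborel. integrable lborel (\<lambda>q. b q * p (t - q) * k t)"
      using int1 by (auto intro!: integrable_mult_left)
  have I1: "integrable lborel (\<lambda>t. LINT q|lborel. norm (b q * p (t - q) * k t))"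
    proof (rule Bochner_Integration.integrable_bound)
      show "integrable lborel (\<lambda>t. (C * P) *\<^sub>R k t)" using k by simp
      show "(\<lambda>t. LINT q|lborel. norm (b q * p (t - q) * k t)) \<in> borel_measurable lborel"
        by (rule lborel.borel_measurable_lebesgue_integral) measurable
      show "AE t in lborel. norm (LINT q|lborel. norm (b q * p (t - q) * k t)) \<le> norm ((C * P) *\<^sub>R k t)"
      proof (rule AE_I2)
        fix t
        have "(LINT q|lborel. norm (b q * p (t - q) * k t)) = (LINT q|lborel. norm (b q * p (t - q))) * norm (k t)"
          by (simp add: norm_mult)
        also have "(LINT q|lborel. norm (b q * p (t - q))) \<le> (LINT q|lborel. C * norm (p (t - q)))"
          by (rule integral_mono_AE) (use int1n ipn bnd C in \<open>auto simp: norm_mult intro!: mult_right_mono\<close>)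
        also have "\<dots> = C * P" using Pt by simp
        finally have le: "(LINT q|lborel. norm (b q * p (t - q) * k t)) \<le> C * P * norm (k t)"
          by (simp add: mult_right_mono)
        have P0: "0 \<le> P" unfolding P_def by simp
        have "0 \<le> (LINT q|lborel. norm (b q * p (t - q) * k t))" by simp
        then show "norm (LINT q|lborel. norm (b q * p (t - q) * k t)) \<le> norm ((C * P) *\<^sub>R k t)"
          using le C P0 by simp
      qed
    qed
  show ?thesis
    by (rule lborel_pair.Fubini_integrable[OF M]) (use I1 I2 in simp_all)
qed

lemma conv_fubini:
  fixes b p k :: "real \<Rightarrow> complex"
  assumes [measurable]: "b \<in> borel_measurable borel"
    and bnd: "AE q in lborel. norm (b q) \<le> C" and C: "0 \<le> C"
    and p: "integrable lborel p" and k: "integrable lborel k"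
  shows "(LINT t|lborel. LINT q|lborel. b q * p (t - q) * k t) = (LINT q|lborel. LINT t|lborel. b q * p (t - q) * k t)"
    and "integrable lborel (\<lambda>q. LINT t|lborel. b q * p (t - q) * k t)"
proof -
  have I: "integrable (lborel \<Otimes>\<^sub>M lborel) (case_prod (\<lambda>t q. b q * p (t - q) * k t))"
    using conv_integrable[OF assms] by simp
  show "(LINT t|lborel. LINT q|lborel. b q * p (t - q) * k t) = (LINT q|lborel. LINT t|lborel. b q * p (t - q) * k t)"
    using lborel_pair.Fubini_integral[OF I] by simp
  show "integrable lborel (\<lambda>q. LINT t|lborel. b q * p (t - q) * k t)"
    using lborel_pair.integrable_snd[OF I] by simp
qed



lemma core:
  fixes a p Fo k :: "real \<Rightarrow> complex" and \<Phi> :: "real filter"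
  assumes am[measurable]: "a \<in> borel_measurable borel" and Fm[measurable]: "Fo \<in> borel_measurable borel"
    and p: "integrable lborel p" and p0: "\<And>y. y < 0 \<Longrightarrow> p y = 0"
    and abnd: "AE y in lborel. 0 \<le> y \<longrightarrow> norm (a y) \<le> C"
    and Fbnd: "AE y in lborel. norm (Fo y) \<le> C" and C: "0 \<le> C"
    and WL: "\<And>k. integrable lborel k \<Longrightarrow>
       ((\<lambda>s. LINT t|lborel. indicator {-s..} t * a (s + t) * k t) \<longlongrightarrow> (LINT t|lborel. Fo t * k t)) \<Phi>"
    and k: "integrable lborel k"
  shows "((\<lambda>s. LINT t|lborel. indicator {-s..} t * (LINT r|lborel. indicator {0..} r * a r * p (s + t - r)) * k t)
           \<longlongrightarrow> (LINT t|lborel. (LINT r|lborel. Fo (t - r) * p r) * k t)) \<Phi>"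
proof -
  have pm[measurable]: "p \<in> borel_measurable borel" using borel_measurable_integrable[OF p] by simp
  have km[measurable]: "k \<in> borel_measurable borel" using borel_measurable_integrable[OF k] by simp
  define K where "K q = (LINT t|lborel. p (t - q) * k t)" for q
  have Kint: "integrable lborel K"
    using conv_fubini(2)[of "\<lambda>_. 1" 1 p k] p k unfolding K_def by simp
  have eq: "(LINT t|lborel. indicator {-s..} t * (LINT r|lborel. indicator {0..} r * a r * p (s + t - r)) * k t)
      = (LINT q|lborel. indicator {-s..} q * a (s + q) * K q)" for s
  proof -
    define b where "b q = indicator {-s..} q * a (s + q)" for q
    have bm[measurable]: "b \<in> borel_measurable borel" unfolding b_def by measurable
    have "AE q in lborel. 0 \<le> s + q \<longrightarrow> norm (a (s + q)) \<le> C"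
      by (rule lborel_AE_shift[OF _ abnd]) measurable
    then have bbnd: "AE q in lborel. norm (b q) \<le> C"
      by eventually_elim (use C in \<open>auto simp: b_def indicator_def\<close>)
    have e1: "indicator {-s..} t * (LINT r|lborel. indicator {0..} r * a r * p (s + t - r))
        = (LINT q|lborel. b q * p (t - q))" for t
    proof -
      have "(LINT r|lborel. indicator {0..} r * a r * p (s + t - r)) = (LINT q|lborel. indicator {0..} (s + q) * a (s + q) * p (s + t - (s + q)))"
        by (rule lborel_integral_shift)
      also have "\<dots> = (LINT q|lborel. b q * p (t - q))"
        by (intro Bochner_Integration.integral_cong) (auto simp: b_def indicator_def)
      finally have 1: "(LINT r|lborel. indicator {0..} r * a r * p (s + t - r)) = (LINT q|lborel. b q * p (t - q))" .
      show ?thesis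
      proof (cases "t < -s")
        case True
        have z: "b q * p (t - q) = 0" for q
          using True p0[of "t - q"] by (auto simp: b_def indicator_def)
        have "(LINT q|lborel. b q * p (t - q)) = 0"
          by (simp add: z)
        then show ?thesis using True 1 by simp
      next
        case False
        then show ?thesis using 1 by simp
      qed
    qed
    have "(LINT t|lborel. indicator {-s..} t * (LINT r|lborel. indicator {0..} r * a r * p (s + t - r)) * k t)
        = (LINT t|lborel. LINT q|lborel. b q * p (t - q) * k t)"
      by (simp add: e1)
    also have "\<dots> = (LINT q|lborel. LINT t|lborel. b q * p (t - q) * k t)"
      by (rule conv_fubini(1)[OF bm bbnd C p k])
    also have "\<dots> = (LINT q|lborel. indicator {-s..} q * a (s + q) * K q)"
      by (simp add: K_def b_def mult.assoc)
    finally show ?thesis .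
  qed
  have lim: "(LINT q|lborel. Fo q * K q) = (LINT t|lborel. (LINT r|lborel. Fo (t - r) * p r) * k t)"
  proof -
    have "(LINT q|lborel. Fo q * K q) = (LINT q|lborel. LINT t|lborel. Fo q * p (t - q) * k t)"
      by (simp add: K_def mult.assoc)
    also have "\<dots> = (LINT t|lborel. LINT q|lborel. Fo q * p (t - q) * k t)"
      by (rule conv_fubini(1)[OF Fm Fbnd C p k, symmetric])
    also have "\<dots> = (LINT t|lborel. (LINT q|lborel. Fo q * p (t - q)) * k t)"
      by simp
    also have "\<dots> = (LINT t|lborel. (LINT r|lborel. Fo (t - r) * p r) * k t)"
    proof -
      have "(LINT q|lborel. Fo q * p (t - q)) = (LINT r|lborel. Fo (t - r) * p r)" for t
        using lborel_integral_reflect[of "\<lambda>q. Fo q * p (t - q)" t] by simp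
      then show ?thesis by simp
    qed
    finally show ?thesis .
  qed
  show ?thesis
    unfolding eq lim[symmetric] by (rule WL[OF Kint])
qed



lemma free_ev_ne: assumes "free_uf \<eta>" shows "eventually (\<lambda>n. n \<noteq> m) \<eta>"
  using assms unfolding free_uf_def is_ultrafilter_def by metis

lemma free_ev_ge: assumes "free_uf \<eta>" shows "eventually (\<lambda>n. K \<le> n) \<eta>"
proof -
  have "eventually (\<lambda>n. \<forall>m\<in>{..<K}. n \<noteq> m) \<eta>"
    by (rule eventually_ball_finite) (use free_ev_ne[OF assms] in auto)
  then show ?thesis by eventually_elim (auto simp: not_less[symmetric])
qed

lemma free_nbot: assumes "free_uf \<eta>" shows "\<eta> \<noteq> bot"
  using assms unfolding free_uf_def is_ultrafilter_def by simp

lemma Phi_ge: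
  assumes "free_uf \<eta>" "0 \<le> u"
  shows "eventually (\<lambda>s. c \<le> s) (omega_filter (\<eta>, u))"
proof -
  have "eventually (\<lambda>n. nat \<lceil>c\<rceil> \<le> n) \<eta>" by (rule free_ev_ge[OF assms(1)])
  then have "eventually (\<lambda>n. c \<le> u + real n) \<eta>"
  proof eventually_elim
    case (elim n)
    then have "c \<le> real n" by linarith
    then show ?case using assms(2) by linarith
  qed
  then show ?thesis by (simp add: omega_filter_def eventually_filtermap)
qed

lemma Phi_nbot: assumes "free_uf \<eta>" shows "omega_filter (\<eta>, u) \<noteq> bot"
  using free_nbot[OF assms] by (simp add: omega_filter_def filtermap_bot_iff)

lemma tau_s_N:
  assumes "0 \<le> u" "u < 1"
  shows "tau_s (- real N) (\<eta>, u) = (tau_pow (- int N) \<eta>, u)"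
proof -
  have "\<lfloor>u + - real N\<rfloor> = - int N"
    using assms by (subst floor_unique[where z="- int N"]) auto
  then show ?thesis by (simp add: tau_s_def)
qed

lemma tendsto_shiftN:
  assumes "free_uf \<eta>" "0 \<le> u" "u < 1"
  shows "(X \<longlongrightarrow> L) (omega_filter (tau_s (- real N) (\<eta>, u))) \<longleftrightarrow>
         ((\<lambda>s. X (s - real N)) \<longlongrightarrow> L) (omega_filter (\<eta>, u))"
proof -
  have "(X \<longlongrightarrow> L) (omega_filter (tau_s (- real N) (\<eta>, u))) \<longleftrightarrow>
        ((\<lambda>n. X (u + real (nat (int n - int N)))) \<longlongrightarrow> L) \<eta>"
    using assms by (simp add: tau_s_N omega_filter_def tau_pow_def filterlim_filtermap)
  also have "\<dots> \<longleftrightarrow> ((\<lambda>n. X (u + real n - real N)) \<longlongrightarrow> L) \<eta>"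
  proof (rule tendsto_cong)
    show "eventually (\<lambda>n. X (u + real (nat (int n - int N))) = X (u + real n - real N)) \<eta>"
      using free_ev_ge[OF assms(1), of N] by eventually_elim (simp add: of_nat_diff add_diff_eq)
  qed
  also have "\<dots> \<longleftrightarrow> ((\<lambda>s. X (s - real N)) \<longlongrightarrow> L) (omega_filter (\<eta>, u))"
    by (simp add: omega_filter_def filterlim_filtermap)
  finally show ?thesis .
qed



lemma borel_measurable_cnj'[measurable]:
  "f \<in> borel_measurable M \<Longrightarrow> (\<lambda>x. cnj (f x)) \<in> borel_measurable M"
  by (rule borel_measurable_continuous_on[of cnj]) (auto intro: continuous_intros)

lemma approx_tendsto:
  fixes X :: "'a \<Rightarrow> complex" and XN :: "nat \<Rightarrow> 'a \<Rightarrow> complex"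
  assumes lim: "\<And>N. N > 0 \<Longrightarrow> (XN N \<longlongrightarrow> LN N) F"
    and close: "\<And>N. N > 0 \<Longrightarrow> eventually (\<lambda>s. dist (X s) (XN N s) \<le> e N) F"
    and closeL: "\<And>N. N > 0 \<Longrightarrow> dist L (LN N) \<le> e N"
    and e: "e \<longlonglongrightarrow> 0"
  shows "(X \<longlongrightarrow> L) F"
proof (rule tendstoI)
  fix \<epsilon> :: real assume \<epsilon>: "\<epsilon> > 0"
  from e \<epsilon> have "eventually (\<lambda>N. \<bar>e N\<bar> < \<epsilon> / 3) sequentially"
    by (auto dest: tendstoD[where e="\<epsilon>/3"] simp: dist_real_def)
  then obtain N0 where N0: "\<And>N. N \<ge> N0 \<Longrightarrow> \<bar>e N\<bar> < \<epsilon> / 3" by (auto simp: eventually_sequentially)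
  define N where "N = Suc N0"
  have N: "N > 0" "\<bar>e N\<bar> < \<epsilon> / 3" using N0[of N] by (auto simp: N_def)
  have ev1: "eventually (\<lambda>s. dist (XN N s) (LN N) < \<epsilon> / 3) F"
    using tendstoD[OF lim[OF N(1)], of "\<epsilon> / 3"] \<epsilon> by simp
  show "eventually (\<lambda>s. dist (X s) L < \<epsilon>) F"
    using ev1 close[OF N(1)]
  proof eventually_elim
    case (elim s)
    have "dist (X s) L \<le> dist (X s) (XN N s) + dist (XN N s) (LN N) + dist (LN N) L"
      by (metis dist_triangle add.commute add_le_cancel_left dist_triangle2 order.trans)
    also have "\<dots> < \<epsilon>" using elim closeL[OF N(1)] N(2) by (simp add: dist_commute)
    finally show ?case .
  qed
qed

lemma tail_to_zero:
  fixes k :: "real \<Rightarrow> complex"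
  assumes k: "integrable lborel k"
  shows "(\<lambda>N::nat. LINT t|lborel. indicator {..< - real N} t * norm (k t)) \<longlonglongrightarrow> 0"
proof -
  have km[measurable]: "k \<in> borel_measurable borel" using borel_measurable_integrable[OF k] by simp
  have P3: "integrable lborel (\<lambda>t. norm (k t))" using k by simp
  have P4: "AE t in lborel. (\<lambda>N::nat. indicator {..< - real N} t * norm (k t)) \<longlonglongrightarrow> 0"
    proof (rule AE_I2)
      fix t :: real
      obtain N0 :: nat where "- t \<le> real N0" using real_arch_simple by blast
      then have "eventually (\<lambda>N::nat. indicator {..< - real N} t * norm (k t) = 0) sequentially"
        unfolding eventually_sequentially by (intro exI[of _ N0]) (auto simp: indicator_def)
      then show "(\<lambda>N::nat. indicator {..< - real N} t * norm (k t)) \<longlonglongrightarrow> 0"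
        by (rule tendsto_eventually)
    qed
  have P5: "AE t in lborel. norm (indicator {..< - real N} t * norm (k t)) \<le> norm (k t)" for N :: nat
      by (auto simp: indicator_def)
  have P1: "(\<lambda>t. 0::real) \<in> borel_measurable lborel" by simp
  have P2: "(\<lambda>t. indicator {..< - real N} t * norm (k t)) \<in> borel_measurable lborel" for N :: nat by simp
  note Bochner_Integration.integral_dominated_convergence[OF P1 P2 P3 P4 P5]
  then show ?thesis by simp
qed

lemma integrable_ind_interval: "integrable lborel (\<lambda>z. indicator {0..real n} z :: complex)"
proof -
  have "integrable lborel (\<lambda>z. complex_of_real (indicator {0..real n} z))"
    by (intro integrable_of_real integrable_real_indicator) auto
  then show ?thesis by (simp add: of_real_indicator)
qed

lemma integrable_bdd_interval:
  fixes g :: "real \<Rightarrow> complex"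
  assumes [measurable]: "g \<in> borel_measurable borel"
    and "AE z in lborel. 0 \<le> z \<longrightarrow> norm (g z) \<le> B"
  shows "integrable lborel (\<lambda>z. indicator {0..real n} z * g z)"
proof (rule Bochner_Integration.integrable_bound)
  show "integrable lborel (\<lambda>z. of_real B * indicator {0..real n} z :: complex)"
    using integrable_ind_interval[of n] by simp
  show "(\<lambda>z. indicator {0..real n} z * g z) \<in> borel_measurable lborel" by simp
  show "AE z in lborel. norm (indicator {0..real n} z * g z) \<le> norm (of_real B * indicator {0..real n} z :: complex)"
    using assms(2) by eventually_elim (auto simp: indicator_def)
qed

lemma ae_unique:
  fixes D1 D2 :: "real \<Rightarrow> complex"
  assumes [measurable]: "D1 \<in> borel_measurable borel" "D2 \<in> borel_measurable borel"
    and b1: "AE z in lborel. 0 \<le> z \<longrightarrow> norm (D1 z) \<le> B1"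
    and b2: "AE z in lborel. 0 \<le> z \<longrightarrow> norm (D2 z) \<le> B2"
    and eq: "\<And>k. integrable lborel k \<Longrightarrow>
      (LINT z|lborel. indicator {0..} z * D1 z * k z) = (LINT z|lborel. indicator {0..} z * D2 z * k z)"
  shows "AE z in lborel. 0 \<le> z \<longrightarrow> D1 z = D2 z"
proof -
  define D where "D z = D1 z - D2 z" for z
  have Dm[measurable]: "D \<in> borel_measurable borel" unfolding D_def by simp
  have bD: "AE z in lborel. 0 \<le> z \<longrightarrow> norm (D z) \<le> B1 + B2"
    using b1 b2 by eventually_elim (auto simp: D_def intro: order.trans[OF norm_triangle_ineq4])
  have bDc: "AE z in lborel. 0 \<le> z \<longrightarrow> norm (cnj (D z)) \<le> B1 + B2"
    using bD by simp
  have n: "AE z in lborel. z \<in> {0..real n} \<longrightarrow> D z = 0" for n :: nat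
  proof -
    define k where "k z = indicator {0..real n} z * cnj (D z)" for z
    have ki: "integrable lborel k" unfolding k_def
      by (rule integrable_bdd_interval[OF _ bDc]) simp
    have bb1: "AE z in lborel. 0 \<le> z \<longrightarrow> norm (D1 z * cnj (D z)) \<le> B1 * (B1 + B2)"
      using b1 bD by eventually_elim (auto simp: norm_mult intro!: mult_mono order.trans[OF norm_ge_zero])
    have bb2: "AE z in lborel. 0 \<le> z \<longrightarrow> norm (D2 z * cnj (D z)) \<le> B2 * (B1 + B2)"
      using b2 bD by eventually_elim (auto simp: norm_mult intro!: mult_mono order.trans[OF norm_ge_zero])
    have i1: "integrable lborel (\<lambda>z. indicator {0..real n} z * (D1 z * cnj (D z)))"
      by (rule integrable_bdd_interval[OF _ bb1]) simp
    have i2: "integrable lborel (\<lambda>z. indicator {0..real n} z * (D2 z * cnj (D z)))"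
      by (rule integrable_bdd_interval[OF _ bb2]) simp
    have r: "indicator {0..} z * Di z * k z = indicator {0..real n} z * (Di z * cnj (D z))" for z and Di :: "real \<Rightarrow> complex"
      by (auto simp: k_def indicator_def)
    have "0 = (LINT z|lborel. indicator {0..} z * D1 z * k z) - (LINT z|lborel. indicator {0..} z * D2 z * k z)"
      using eq[OF ki] by simp
    also have "\<dots> = (LINT z|lborel. indicator {0..real n} z * (D1 z * cnj (D z))) - (LINT z|lborel. indicator {0..real n} z * (D2 z * cnj (D z)))"
      by (simp only: r)
    also have "\<dots> = (LINT z|lborel. indicator {0..real n} z * (D1 z * cnj (D z)) - indicator {0..real n} z * (D2 z * cnj (D z)))"
      by (rule Bochner_Integration.integral_diff[OF i1 i2, symmetric])
    also have "\<dots> = (LINT z|lborel. complex_of_real (indicator {0..real n} z * (norm (D z))\<^sup>2))"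
    proof (intro Bochner_Integration.integral_cong refl)
      fix z
      have "D1 z * cnj (D z) - D2 z * cnj (D z) = D z * cnj (D z)" by (simp add: D_def algebra_simps)
      also have "\<dots> = complex_of_real ((norm (D z))\<^sup>2)" by (simp add: complex_norm_square del: of_real_power)
      finally show "indicator {0..real n} z * (D1 z * cnj (D z)) - indicator {0..real n} z * (D2 z * cnj (D z)) =
          complex_of_real (indicator {0..real n} z * (norm (D z))\<^sup>2)"
        by (simp add: indicator_def)
    qed
    also have "\<dots> = complex_of_real (LINT z|lborel. indicator {0..real n} z * (norm (D z))\<^sup>2)"
      by (rule integral_complex_of_real)
    finally have z: "(LINT z|lborel. indicator {0..real n} z * (norm (D z))\<^sup>2) = 0" by simp
    have bDn: "AE z in lborel. 0 \<le> z \<longrightarrow> norm (complex_of_real ((norm (D z))\<^sup>2)) \<le> (B1 + B2)\<^sup>2"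
      using bD by eventually_elim (auto simp: norm_power intro!: power_mono)
    have "integrable lborel (\<lambda>z. indicator {0..real n} z * complex_of_real ((norm (D z))\<^sup>2))"
      by (rule integrable_bdd_interval[OF _ bDn]) simp
    then have "integrable lborel (\<lambda>z. complex_of_real (indicator {0..real n} z * (norm (D z))\<^sup>2))"
      by (simp add: of_real_indicator)
    then have iR: "integrable lborel (\<lambda>z. indicator {0..real n} z * (norm (D z))\<^sup>2)"
      using integrable_Re by fastforce
    have "AE z in lborel. indicator {0..real n} z * (norm (D z))\<^sup>2 = 0"
      using z by (subst (asm) integral_nonneg_eq_0_iff_AE[OF iR]) auto
    then show ?thesis by eventually_elim (auto simp: indicator_def)
  qed
  have "AE z in lborel. \<forall>n::nat. z \<in> {0..real n} \<longrightarrow> D z = 0"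
    by (rule AE_all_countable[THEN iffD2]) (use n in blast)
  then show ?thesis
  proof eventually_elim
    case (elim z)
    show ?case
    proof
      assume "0 \<le> z"
      obtain n :: nat where "z \<le> real n" using real_arch_simple by blast
      then show "D1 z = D2 z" using elim \<open>0 \<le> z\<close> by (auto simp: D_def)
    qed
  qed
qed



lemma integrable_cReal:
  assumes "integrable M (\<lambda>x. complex_of_real (f x))" shows "integrable M f"
  using integrable_Re[OF assms] by simp

lemma wlim_bound:
  fixes q :: "real \<Rightarrow> real \<Rightarrow> complex" and H :: "real \<Rightarrow> complex"
  assumes qm[measurable]: "\<And>s. q s \<in> borel_measurable borel" and Hm[measurable]: "H \<in> borel_measurable borel"
    and qb: "eventually (\<lambda>s. AE y in lborel. 0 \<le> y \<longrightarrow> norm (q s y) \<le> C) \<Phi>"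
    and Hb: "AE y in lborel. 0 \<le> y \<longrightarrow> norm (H y) \<le> B"
    and lim: "\<And>k. integrable lborel k \<Longrightarrow>
       ((\<lambda>s. LINT y|lborel. indicator {0..} y * q s y * k y) \<longlongrightarrow> (LINT y|lborel. indicator {0..} y * H y * k y)) \<Phi>"
    and nb: "\<Phi> \<noteq> bot" and C: "0 \<le> C"
  shows "AE y in lborel. 0 \<le> y \<longrightarrow> norm (H y) \<le> C"
proof -
  define A where "A = {y. C < norm (H y)}"
  have Am[measurable]: "A \<in> sets borel" unfolding A_def by measurable
  define S where "S y = indicator A y * (cnj (H y) / of_real (norm (H y)))" for y
  have Sm[measurable]: "S \<in> borel_measurable borel" unfolding S_def by measurable
  have Sb: "norm (S y) \<le> 1" for y
    by (cases "H y = 0") (auto simp: S_def indicator_def norm_divide)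
  have HS: "H y * S y = of_real (indicator A y * norm (H y))" for y
  proof (cases "H y = 0")
    case False
    then show ?thesis
      by (simp add: S_def indicator_def field_simps complex_norm_square[symmetric] power2_eq_square)
  qed (simp add: S_def)
  have n: "AE y in lborel. y \<in> {0..real n} \<longrightarrow> y \<notin> A" for n :: nat
  proof -
    define k where "k y = indicator {0..real n} y * S y" for y
    have ki: "integrable lborel k" unfolding k_def
      by (rule integrable_bdd_interval[where B=1]) (use Sb in auto)
    have iA: "integrable lborel (\<lambda>y. indicator {0..real n} y * indicator A y :: real)"
    proof -
      have "integrable lborel (\<lambda>y. indicator {0..real n} y * complex_of_real (indicator A y))"
        by (rule integrable_bdd_interval[where B=1]) (auto simp: indicator_def)
      then have "integrable lborel (\<lambda>y. complex_of_real (indicator {0..real n} y * indicator A y))"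
        by (simp add: of_real_indicator)
      then show ?thesis by (rule integrable_cReal)
    qed
    have iAH: "integrable lborel (\<lambda>y. indicator {0..real n} y * (indicator A y * norm (H y)))"
    proof -
      have "integrable lborel (\<lambda>y. indicator {0..real n} y * complex_of_real (indicator A y * norm (H y)))"
      proof (rule integrable_bdd_interval[where B="max B 0"])
        show "AE z in lborel. 0 \<le> z \<longrightarrow> norm (complex_of_real (indicator A z * norm (H z))) \<le> max B 0"
          using Hb by eventually_elim (auto simp: indicator_def)
      qed simp
      then have "integrable lborel (\<lambda>y. complex_of_real (indicator {0..real n} y * (indicator A y * norm (H y))))"
        by (simp add: of_real_indicator)
      then show ?thesis by (rule integrable_cReal)
    qed
    have limv: "(LINT y|lborel. indicator {0..} y * H y * k y) = of_real (LINT y|lborel. indicator {0..real n} y * (indicator A y * norm (H y)))"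
    proof -
      have "(LINT y|lborel. indicator {0..} y * H y * k y) = (LINT y|lborel. complex_of_real (indicator {0..real n} y * (indicator A y * norm (H y))))"
      proof (intro Bochner_Integration.integral_cong refl)
        fix y
        have "indicator {0..} y * H y * k y = indicator {0..} y * indicator {0..real n} y * (H y * S y)"
          by (simp add: k_def algebra_simps)
        also have "\<dots> = complex_of_real (indicator {0..real n} y * (indicator A y * norm (H y)))"
          unfolding HS by (simp add: indicator_def)
        finally show "indicator {0..} y * H y * k y = complex_of_real (indicator {0..real n} y * (indicator A y * norm (H y)))" .
      qed
      then show ?thesis by (simp only: integral_complex_of_real)
    qed
    have ev: "eventually (\<lambda>s. norm (LINT y|lborel. indicator {0..} y * q s y * k y) \<le> C * (LINT y|lborel. indicator {0..real n} y * indicator A y)) \<Phi>"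
      using qb
    proof eventually_elim
      case (elim s)
      have b: "AE y in lborel. norm (indicator {0..} y * q s y * k y) \<le> C * (indicator {0..real n} y * indicator A y)"
        using elim
      proof eventually_elim
        case (elim y)
        show ?case
        proof (cases "y \<in> {0..real n} \<and> y \<in> A")
          case True
          then have "norm (S y) \<le> 1" by (rule_tac Sb)
          then have "norm (q s y) * norm (S y) \<le> C * 1"
            using elim True C by (intro mult_mono) auto
          then show ?thesis using True by (simp add: k_def norm_mult)
        next
          case False
          then show ?thesis by (auto simp: k_def S_def indicator_def)
        qed
      qed
      have i: "integrable lborel (\<lambda>y. indicator {0..} y * q s y * k y)"
      proof (rule Bochner_Integration.integrable_bound)
        show "integrable lborel (\<lambda>y. C * (indicator {0..real n} y * indicator A y))" using iA by simp
        show "(\<lambda>y. indicator {0..} y * q s y * k y) \<in> borel_measurable lborel" unfolding k_def by simp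
        show "AE y in lborel. norm (indicator {0..} y * q s y * k y) \<le> norm (C * (indicator {0..real n} y * indicator A y))"
          using b by eventually_elim (use C in \<open>auto simp: indicator_def\<close>)
      qed
      have "norm (LINT y|lborel. indicator {0..} y * q s y * k y) \<le> (LINT y|lborel. norm (indicator {0..} y * q s y * k y))"
        by (rule integral_norm_bound)
      also have "\<dots> \<le> (LINT y|lborel. C * (indicator {0..real n} y * indicator A y))"
        by (rule integral_mono_AE) (use i iA b in auto)
      also have "\<dots> = C * (LINT y|lborel. indicator {0..real n} y * indicator A y)" by simp
      finally show ?case .
    qed
    have "norm (LINT y|lborel. indicator {0..} y * H y * k y) \<le> C * (LINT y|lborel. indicator {0..real n} y * indicator A y)"
      by (rule tendsto_upperbound[OF tendsto_norm[OF lim[OF ki]] ev]) (use nb in simp)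
    then have le: "(LINT y|lborel. indicator {0..real n} y * (indicator A y * norm (H y))) \<le> C * (LINT y|lborel. indicator {0..real n} y * indicator A y)"
      unfolding limv by simp
    have iD: "integrable lborel (\<lambda>y. indicator {0..real n} y * (indicator A y * norm (H y)) - C * (indicator {0..real n} y * indicator A y))"
      using iAH iA by simp
    have "(LINT y|lborel. indicator {0..real n} y * (indicator A y * norm (H y)) - C * (indicator {0..real n} y * indicator A y)) \<le> 0"
      using le iAH iA by simp
    moreover have nn: "AE y in lborel. 0 \<le> indicator {0..real n} y * (indicator A y * norm (H y)) - C * (indicator {0..real n} y * indicator A y)"
      by (rule AE_I2) (auto simp: indicator_def A_def)
    ultimately have "(LINT y|lborel. indicator {0..real n} y * (indicator A y * norm (H y)) - C * (indicator {0..real n} y * indicator A y)) = 0"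
      using integral_nonneg_AE[OF nn] by linarith
    then have "AE y in lborel. indicator {0..real n} y * (indicator A y * norm (H y)) - C * (indicator {0..real n} y * indicator A y) = 0"
      using integral_nonneg_eq_0_iff_AE[OF iD nn] by simp
    then show ?thesis by eventually_elim (auto simp: indicator_def A_def)
  qed
  have "AE y in lborel. \<forall>n::nat. y \<in> {0..real n} \<longrightarrow> y \<notin> A"
    by (rule AE_all_countable[THEN iffD2]) (use n in blast)
  then show ?thesis
  proof eventually_elim
    case (elim y)
    show ?case
    proof
      assume "0 \<le> y"
      obtain n :: nat where "y \<le> real n" using real_arch_simple by blast
      then show "norm (H y) \<le> C" using elim \<open>0 \<le> y\<close> by (auto simp: A_def not_less)
    qed
  qed
qed

lemma wlim_to_log:
  fixes g G k :: "real \<Rightarrow> complex"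
  assumes W: "wlim_rep g \<omega> G" and gm[measurable]: "g \<in> borel_measurable borel" and k: "integrable lborel k"
  shows "((\<lambda>s. LINT y|lborel. indicator {0..} y * g (exp (s + y)) * k y)
          \<longlongrightarrow> (LINT y|lborel. indicator {0..} y * G (exp y) * k y)) (omega_filter \<omega>)"
proof -
  have Gm[measurable]: "G \<in> borel_measurable borel" using W by (simp add: wlim_rep_def Linf1_def)
  have km[measurable]: "k \<in> borel_measurable borel" using borel_measurable_integrable[OF k] by simp
  define \<phi> where "\<phi> t = k (ln t)" for t
  have \<phi>m[measurable]: "\<phi> \<in> borel_measurable borel" unfolding \<phi>_def by measurable
  have "integrable lborel (\<lambda>y. indicator {0..} y * \<phi> (exp y))"
  proof (rule Bochner_Integration.integrable_bound[OF k])
    show "(\<lambda>y. indicator {0..} y * \<phi> (exp y)) \<in> borel_measurable lborel" by simp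
    show "AE y in lborel. norm (indicator {0..} y * \<phi> (exp y)) \<le> norm (k y)"
      by (auto simp: \<phi>_def indicator_def)
  qed
  then have \<phi>i: "integrable haar1 \<phi>" by (subst haar1_integrable) simp_all
  have L: "((\<lambda>s. LINT t|haar1. g (exp s * t) * \<phi> t) \<longlongrightarrow> (LINT t|haar1. G t * \<phi> t)) (omega_filter \<omega>)"
    using W \<phi>i by (simp add: wlim_rep_def)
  have e1: "(LINT t|haar1. g (exp s * t) * \<phi> t) = (LINT y|lborel. indicator {0..} y * g (exp (s + y)) * k y)" for s
    by (subst haar1_integral) (simp_all add: \<phi>_def exp_add mult.assoc)
  have e2: "(LINT t|haar1. G t * \<phi> t) = (LINT y|lborel. indicator {0..} y * G (exp y) * k y)"
    by (subst haar1_integral) (simp_all add: \<phi>_def mult.assoc)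
  show ?thesis using L unfolding e1 e2 .
qed



lemma bdd_mult_integrable:
  fixes b m :: "real \<Rightarrow> complex"
  assumes [measurable]: "b \<in> borel_measurable borel"
    and bnd: "AE t in lborel. norm (b t) \<le> C" and m: "integrable lborel m"
  shows "integrable lborel (\<lambda>t. b t * m t)"
    and "norm (LINT t|lborel. b t * m t) \<le> C * (LINT t|lborel. norm (m t))"
proof -
  have mm[measurable]: "m \<in> borel_measurable borel" using borel_measurable_integrable[OF m] by simp
  have b2: "AE t in lborel. norm (b t * m t) \<le> C * norm (m t)"
    using bnd by eventually_elim (auto simp: norm_mult intro: mult_right_mono)
  show i: "integrable lborel (\<lambda>t. b t * m t)"
  proof (rule Bochner_Integration.integrable_bound)
    show "integrable lborel (\<lambda>t. C * norm (m t))" using m by simp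
    show "(\<lambda>t. b t * m t) \<in> borel_measurable lborel" by simp
    show "AE t in lborel. norm (b t * m t) \<le> norm (C * norm (m t))"
      using b2 by eventually_elim (use order_trans[OF _ abs_ge_self] in auto)
  qed
  have "norm (LINT t|lborel. b t * m t) \<le> (LINT t|lborel. norm (b t * m t))"
    by (rule integral_norm_bound)
  also have "\<dots> \<le> (LINT t|lborel. C * norm (m t))"
    by (rule integral_mono_AE) (use i m b2 in auto)
  also have "\<dots> = C * (LINT t|lborel. norm (m t))" by simp
  finally show "norm (LINT t|lborel. b t * m t) \<le> C * (LINT t|lborel. norm (m t))" .
qed

lemma shifted_bound:
  fixes f :: "real \<Rightarrow> complex"
  assumes [measurable]: "f \<in> borel_measurable borel"
    and abnd: "AE y in lborel. 0 \<le> y \<longrightarrow> norm (f (exp y)) \<le> C" and C: "0 \<le> C"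
  shows "AE t in lborel. norm (indicator {-s..} t * f (exp (s + t))) \<le> C"
proof -
  have "AE t in lborel. 0 \<le> s + t \<longrightarrow> norm (f (exp (s + t))) \<le> C"
    by (rule lborel_AE_shift[OF _ abnd]) measurable
  then show ?thesis by eventually_elim (use C in \<open>auto simp: indicator_def\<close>)
qed



lemma step1:
  fixes f F :: "real \<Rightarrow> complex" and \<eta> :: "nat filter" and u C :: real
  assumes free: "free_uf \<eta>" and u: "0 \<le> u" "u < 1"
    and fm[measurable]: "f \<in> borel_measurable borel"
    and abnd: "AE y in lborel. 0 \<le> y \<longrightarrow> norm (f (exp y)) \<le> C" and C: "0 \<le> C"
    and E: "ext_rep f (\<eta>, u) F"
  shows "AE y in lborel. norm (F (exp y)) \<le> C"
    and "\<And>k. integrable lborel k \<Longrightarrow>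
       ((\<lambda>s. LINT t|lborel. indicator {-s..} t * f (exp (s + t)) * k t) \<longlongrightarrow> (LINT t|lborel. F (exp t) * k t))
         (omega_filter (\<eta>, u))"
proof -
  let ?\<Phi> = "omega_filter (\<eta>, u)"
  have Fm[measurable]: "F \<in> borel_measurable borel" using E by (simp add: ext_rep_def)
  obtain h where hW: "wlim_rep f (\<eta>, u) h" and hF0: "AE x in haar. 1 \<le> x \<longrightarrow> F x = h x"
    using E by (auto simp: ext_rep_def)
  have hm[measurable]: "h \<in> borel_measurable borel" using hW by (simp add: wlim_rep_def Linf1_def)
  have "\<forall>N. \<exists>G. 0 < N \<longrightarrow> wlim_rep f (tau_s (- real N) (\<eta>, u)) G \<and>
             (AE x in haar. exp (- real N) \<le> x \<and> x \<le> 1 \<longrightarrow> F x = G (exp (real N) * x))"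
    using E by (auto simp: ext_rep_def)
  then obtain G where GW: "\<And>N. 0 < N \<Longrightarrow> wlim_rep f (tau_s (- real N) (\<eta>, u)) (G N)"
    and GF0: "\<And>N. 0 < N \<Longrightarrow> AE x in haar. exp (- real N) \<le> x \<and> x \<le> 1 \<longrightarrow> F x = G N (exp (real N) * x)"
    by metis
  have Gm[measurable]: "G N \<in> borel_measurable borel" if "0 < N" for N
    using GW[OF that] by (simp add: wlim_rep_def Linf1_def)
  have nb: "?\<Phi> \<noteq> bot" by (rule Phi_nbot[OF free])
  have hF: "AE y in lborel. 0 \<le> y \<longrightarrow> F (exp y) = h (exp y)"
    using hF0 by (subst (asm) haar_AE) simp_all
  have GF: "AE y in lborel. - real N \<le> y \<and> y \<le> 0 \<longrightarrow> F (exp y) = G N (exp (real N + y))" if N: "0 < N" for N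
  proof -
    have "AE y in lborel. exp (- real N) \<le> exp y \<and> exp y \<le> 1 \<longrightarrow> F (exp y) = G N (exp (real N) * exp y)"
      using GF0[OF N] by (subst (asm) haar_AE) (use Gm[OF N] in simp_all)
    then show ?thesis by eventually_elim (simp add: exp_add)
  qed
  have Lh: "((\<lambda>s. LINT y|lborel. indicator {0..} y * f (exp (s + y)) * k y)
          \<longlongrightarrow> (LINT y|lborel. indicator {0..} y * h (exp y) * k y)) ?\<Phi>" if "integrable lborel k" for k
    by (rule wlim_to_log[OF hW fm that])
  have LG: "((\<lambda>s. LINT y|lborel. indicator {0..} y * f (exp (s - real N + y)) * k y)
          \<longlongrightarrow> (LINT y|lborel. indicator {0..} y * G N (exp y) * k y)) ?\<Phi>" if "integrable lborel k" "0 < N" for k N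
    using tendsto_shiftN[OF free u, THEN iffD1, OF wlim_to_log[OF GW[OF that(2)] fm that(1)]] by simp
  have hB: "\<exists>B. AE y in lborel. 0 \<le> y \<longrightarrow> norm (h (exp y)) \<le> B"
  proof -
    obtain B where "AE t in haar1. norm (h t) \<le> B" using hW by (auto simp: wlim_rep_def Linf1_def)
    then show ?thesis by (subst (asm) haar1_AE) auto
  qed
  have GB: "\<exists>B. AE y in lborel. 0 \<le> y \<longrightarrow> norm (G N (exp y)) \<le> B" if N: "0 < N" for N
  proof -
    obtain B where "AE t in haar1. norm (G N t) \<le> B" using GW[OF N] by (auto simp: wlim_rep_def Linf1_def)
    then show ?thesis by (subst (asm) haar1_AE) (use Gm[OF N] in auto)
  qed
  have qb0: "AE y in lborel. 0 \<le> y \<longrightarrow> norm (f (exp (s + y))) \<le> C" if "0 \<le> s" for s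
  proof -
    have "AE y in lborel. 0 \<le> s + y \<longrightarrow> norm (f (exp (s + y))) \<le> C"
      by (rule lborel_AE_shift[OF _ abnd]) measurable
    then show ?thesis by eventually_elim (use that in auto)
  qed
  have hb: "AE y in lborel. 0 \<le> y \<longrightarrow> norm (h (exp y)) \<le> C"
  proof -
    obtain B where B: "AE y in lborel. 0 \<le> y \<longrightarrow> norm (h (exp y)) \<le> B" using hB by blast
    show ?thesis
    proof (rule wlim_bound[where q="\<lambda>s y. f (exp (s + y))" and \<Phi>="?\<Phi>", OF _ _ _ B Lh nb C])
      show "eventually (\<lambda>s. AE y in lborel. 0 \<le> y \<longrightarrow> norm (f (exp (s + y))) \<le> C) ?\<Phi>"
        using Phi_ge[OF free u(1), of 0] by eventually_elim (rule qb0)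
    qed simp_all
  qed
  have Gb: "AE y in lborel. 0 \<le> y \<longrightarrow> norm (G N (exp y)) \<le> C" if N: "0 < N" for N
  proof -
    obtain B where B: "AE y in lborel. 0 \<le> y \<longrightarrow> norm (G N (exp y)) \<le> B" using GB[OF N] by blast
    show ?thesis
    proof (rule wlim_bound[where q="\<lambda>s y. f (exp (s - real N + y))" and \<Phi>="?\<Phi>", OF _ _ _ B LG[OF _ N] nb C])
      show "eventually (\<lambda>s. AE y in lborel. 0 \<le> y \<longrightarrow> norm (f (exp (s - real N + y))) \<le> C) ?\<Phi>"
        using Phi_ge[OF free u(1), of "real N"] by eventually_elim (rule qb0, simp)
    qed (use Gm[OF N] in simp_all)
  qed
  have uniq: "AE z in lborel. 0 \<le> z \<longrightarrow> h (exp z) = G N (exp (real N + z))" if N: "0 < N" for N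
  proof (rule ae_unique[of "\<lambda>z. h (exp z)" "\<lambda>z. G N (exp (real N + z))" C C])
    show "(\<lambda>z. G N (exp (real N + z))) \<in> borel_measurable borel" using Gm[OF N] by simp
    show "AE z in lborel. 0 \<le> z \<longrightarrow> norm (G N (exp (real N + z))) \<le> C"
    proof -
      have "AE z in lborel. 0 \<le> real N + z \<longrightarrow> norm (G N (exp (real N + z))) \<le> C"
        by (rule lborel_AE_shift[OF _ Gb[OF N]]) (use Gm[OF N] in measurable)
      then show ?thesis by eventually_elim auto
    qed
    show "AE z in lborel. 0 \<le> z \<longrightarrow> norm (h (exp z)) \<le> C" by (rule hb)
    fix k :: "real \<Rightarrow> complex" assume k: "integrable lborel k"
    have km[measurable]: "k \<in> borel_measurable borel" using borel_measurable_integrable[OF k] by simp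
    define k' where "k' y = indicator {real N..} y * k (- real N + y)" for y
    have k'i: "integrable lborel k'"
    proof (rule Bochner_Integration.integrable_bound)
      show "integrable lborel (\<lambda>y. k (- real N + y))" by (rule lborel_integrable_shift[THEN iffD2, OF k])
      show "k' \<in> borel_measurable lborel" unfolding k'_def by simp
      show "AE y in lborel. norm (k' y) \<le> norm (k (- real N + y))" by (auto simp: k'_def indicator_def)
    qed
    have seq: "(LINT y|lborel. indicator {0..} y * f (exp (s - real N + y)) * k' y)
             = (LINT y|lborel. indicator {0..} y * f (exp (s + y)) * k y)" for s
      by (subst lborel_integral_shift[where c="real N"]) (auto intro!: Bochner_Integration.integral_cong simp: k'_def indicator_def)
    have limeq: "(LINT y|lborel. indicator {0..} y * G N (exp y) * k' y)
             = (LINT z|lborel. indicator {0..} z * G N (exp (real N + z)) * k z)"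
      by (subst lborel_integral_shift[where c="real N"]) (auto intro!: Bochner_Integration.integral_cong simp: k'_def indicator_def)
    have "((\<lambda>s. LINT y|lborel. indicator {0..} y * f (exp (s + y)) * k y)
          \<longlongrightarrow> (LINT z|lborel. indicator {0..} z * G N (exp (real N + z)) * k z)) ?\<Phi>"
      using LG[OF k'i N] unfolding seq limeq .
    from tendsto_unique[OF nb Lh[OF k] this]
    show "(LINT z|lborel. indicator {0..} z * h (exp z) * k z) = (LINT z|lborel. indicator {0..} z * G N (exp (real N + z)) * k z)" .
  qed simp_all
  have F2: "AE y in lborel. - real N \<le> y \<longrightarrow> F (exp y) = G N (exp (real N + y))" if N: "0 < N" for N
    using GF[OF N] hF uniq[OF N] by eventually_elim (metis linorder_le_cases)
  have GbS: "AE y in lborel. 0 \<le> real N + y \<longrightarrow> norm (G N (exp (real N + y))) \<le> C" if N: "0 < N" for N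
    by (rule lborel_AE_shift[OF _ Gb[OF N]]) (use Gm[OF N] in measurable)
  have allN: "AE y in lborel. \<forall>N::nat. 0 < N \<longrightarrow> ((- real N \<le> y \<longrightarrow> F (exp y) = G N (exp (real N + y))) \<and>
                  (0 \<le> real N + y \<longrightarrow> norm (G N (exp (real N + y))) \<le> C))"
  proof (rule AE_all_countable[THEN iffD2], intro allI)
    fix N :: nat
    show "AE y in lborel. 0 < N \<longrightarrow> ((- real N \<le> y \<longrightarrow> F (exp y) = G N (exp (real N + y))) \<and>
                  (0 \<le> real N + y \<longrightarrow> norm (G N (exp (real N + y))) \<le> C))"
    proof (cases "0 < N")
      case True
      show ?thesis using F2[OF True] GbS[OF True] by eventually_elim auto
    qed simp
  qed
  show Fb: "AE y in lborel. norm (F (exp y)) \<le> C"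
    using allN
  proof eventually_elim
    case (elim y)
    define N where "N = Suc (nat \<lceil>\<bar>y\<bar>\<rceil>)"
    have N: "0 < N" "- real N \<le> y" "0 \<le> real N + y" unfolding N_def by linarith+
    then show ?case using elim by auto
  qed
  fix k :: "real \<Rightarrow> complex" assume k: "integrable lborel k"
  have km[measurable]: "k \<in> borel_measurable borel" using borel_measurable_integrable[OF k] by simp
  define b where "b s t = indicator {-s..} t * f (exp (s + t))" for s t
  have bm[measurable]: "b s \<in> borel_measurable borel" for s unfolding b_def by measurable
  have bb: "AE t in lborel. norm (b s t) \<le> C" for s
    unfolding b_def by (rule shifted_bound[OF fm abnd C])
  define kN where "kN N t = indicator {- real N..} t * k t" for N :: nat and t
  define rN where "rN N t = indicator {..< - real N} t * k t" for N :: nat and t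
  have kNi: "integrable lborel (kN N)" for N
    unfolding kN_def by (rule Bochner_Integration.integrable_bound[OF k]) (auto simp: indicator_def)
  have rNi: "integrable lborel (rN N)" for N
    unfolding rN_def by (rule Bochner_Integration.integrable_bound[OF k]) (auto simp: indicator_def)
  have krN: "k t = kN N t + rN N t" for N t by (auto simp: kN_def rN_def indicator_def)
  define e where "e N = C * (LINT t|lborel. indicator {..< - real N} t * norm (k t))" for N :: nat
  have normr: "(LINT t|lborel. norm (rN N t)) = (LINT t|lborel. indicator {..< - real N} t * norm (k t))" for N
    by (intro Bochner_Integration.integral_cong refl) (auto simp: rN_def indicator_def)
  show "((\<lambda>s. LINT t|lborel. indicator {-s..} t * f (exp (s + t)) * k t) \<longlongrightarrow> (LINT t|lborel. F (exp t) * k t)) ?\<Phi>"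
  proof (rule approx_tendsto[where XN="\<lambda>N s. LINT t|lborel. b s t * kN N t" and LN="\<lambda>N. LINT t|lborel. F (exp t) * kN N t" and e=e])
    show "e \<longlonglongrightarrow> 0" unfolding e_def using tendsto_mult_right_zero[OF tail_to_zero[OF k], of C] by simp
  next
    fix N :: nat assume N: "0 < N"
    have eq1: "(LINT t|lborel. indicator {-s..} t * f (exp (s + t)) * k t) - (LINT t|lborel. b s t * kN N t)
        = (LINT t|lborel. b s t * rN N t)" for s
    proof -
      have "(LINT t|lborel. indicator {-s..} t * f (exp (s + t)) * k t) = (LINT t|lborel. b s t * kN N t + b s t * rN N t)"
        by (intro Bochner_Integration.integral_cong refl) (auto simp: b_def kN_def rN_def indicator_def)
      also have "\<dots> = (LINT t|lborel. b s t * kN N t) + (LINT t|lborel. b s t * rN N t)"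
        by (rule Bochner_Integration.integral_add; rule bdd_mult_integrable(1)[OF bm bb]) (simp_all add: kNi rNi)
      finally show ?thesis by simp
    qed
    show "eventually (\<lambda>s. dist (LINT t|lborel. indicator {-s..} t * f (exp (s + t)) * k t) (LINT t|lborel. b s t * kN N t) \<le> e N) ?\<Phi>"
    proof (rule always_eventually, intro allI)
      fix s
      show "dist (LINT t|lborel. indicator {-s..} t * f (exp (s + t)) * k t) (LINT t|lborel. b s t * kN N t) \<le> e N"
        unfolding dist_norm eq1 e_def normr[symmetric] by (rule bdd_mult_integrable(2)[OF bm bb rNi])
    qed
    have FkN: "integrable lborel (\<lambda>t. F (exp t) * kN N t)" by (rule bdd_mult_integrable(1)[OF _ Fb kNi]) simp
    have FrN: "integrable lborel (\<lambda>t. F (exp t) * rN N t)" by (rule bdd_mult_integrable(1)[OF _ Fb rNi]) simp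
    have eq2: "(LINT t|lborel. F (exp t) * k t) - (LINT t|lborel. F (exp t) * kN N t) = (LINT t|lborel. F (exp t) * rN N t)"
    proof -
      have "(LINT t|lborel. F (exp t) * k t) = (LINT t|lborel. F (exp t) * kN N t + F (exp t) * rN N t)"
        by (intro Bochner_Integration.integral_cong refl) (auto simp: kN_def rN_def indicator_def)
      also have "\<dots> = (LINT t|lborel. F (exp t) * kN N t) + (LINT t|lborel. F (exp t) * rN N t)"
        by (rule Bochner_Integration.integral_add[OF FkN FrN])
      finally show ?thesis by simp
    qed
    show "dist (LINT t|lborel. F (exp t) * k t) (LINT t|lborel. F (exp t) * kN N t) \<le> e N"
      unfolding dist_norm eq2 e_def normr[symmetric] by (rule bdd_mult_integrable(2)[OF _ Fb rNi]) simp
    define k'' where "k'' y = k (- real N + y)" for y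
    have k''i: "integrable lborel k''" unfolding k''_def by (rule lborel_integrable_shift[THEN iffD2, OF k])
    have ev: "eventually (\<lambda>s. (LINT y|lborel. indicator {0..} y * f (exp (s - real N + y)) * k'' y) = (LINT t|lborel. b s t * kN N t)) ?\<Phi>"
      using Phi_ge[OF free u(1), of "real N"]
    proof eventually_elim
      case (elim s)
      have "(LINT t|lborel. b s t * kN N t) = (LINT y|lborel. b s (- real N + y) * kN N (- real N + y))"
        by (rule lborel_integral_shift)
      also have "\<dots> = (LINT y|lborel. indicator {0..} y * f (exp (s - real N + y)) * k'' y)"
        by (intro Bochner_Integration.integral_cong refl) (use elim in \<open>auto simp: b_def kN_def k''_def indicator_def add_diff_eq diff_add_eq\<close>)
      finally show ?case ..
    qed
    have limeq: "(LINT y|lborel. indicator {0..} y * G N (exp y) * k'' y) = (LINT t|lborel. F (exp t) * kN N t)"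
    proof -
      note [measurable] = Gm[OF N]
      have [measurable]: "k'' \<in> borel_measurable borel" unfolding k''_def by measurable
      have [measurable]: "kN N \<in> borel_measurable borel" unfolding kN_def by measurable
      have "(LINT y|lborel. indicator {0..} y * G N (exp y) * k'' y)
          = (LINT t|lborel. indicator {0..} (real N + t) * G N (exp (real N + t)) * k'' (real N + t))"
        by (rule lborel_integral_shift)
      also have "\<dots> = (LINT t|lborel. F (exp t) * kN N t)"
      proof (rule integral_cong_AE)
        show "AE t in lborel. indicator {0..} (real N + t) * G N (exp (real N + t)) * k'' (real N + t) = F (exp t) * kN N t"
          using F2[OF N] by eventually_elim (auto simp: kN_def k''_def indicator_def)
      qed (measurable, measurable)
      finally show ?thesis .
    qed
    show "((\<lambda>s. LINT t|lborel. b s t * kN N t) \<longlongrightarrow> (LINT t|lborel. F (exp t) * kN N t)) ?\<Phi>"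
      using tendsto_cong[OF ev] LG[OF k''i N] unfolding limeq by simp
  qed
qed



lemma integrable_haar1_meas:
  assumes "integrable haar1 \<psi>" shows "\<psi> \<in> borel_measurable borel"
  using borel_measurable_integrable[OF assms] by (simp add: haar1_def)

lemma lborel_AE_reflect:
  assumes [measurable]: "{x \<in> space borel. P x} \<in> sets borel"
    and "AE x in lborel. P (x::real)"
  shows "AE r in lborel. P (c - r)"
proof -
  have "AE x in distr lborel borel uminus. P x" using assms(2) by (simp only: lborel_distr_uminus)
  then have Q: "AE x in lborel. P (- x)" by (subst (asm) AE_distr_iff) simp_all
  have "AE r in lborel. P (- (- c + r))"
    by (rule lborel_AE_shift[OF _ Q]) measurable
  then show ?thesis by simp
qed



lemma pair_borel_lborel:
  "measurable (borel \<Otimes>\<^sub>M lborel) N = measurable (borel \<Otimes>\<^sub>M borel) N"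
  by (rule measurable_cong_sets) (rule sets_pair_measure_cong, simp_all)

lemma U_op_alt:
  fixes \<psi> f :: "real \<Rightarrow> complex"
  assumes [measurable]: "\<psi> \<in> borel_measurable borel" "f \<in> borel_measurable borel"
  shows "U_op \<psi> f x = (LINT r|lborel. indicator {0..} r * (indicator {0..} (x - exp r) * f (exp r) * \<psi> (x / exp r)))"
proof -
  have "U_op \<psi> f x = (LINT t|haar1. indicator {0..} (x - t) * f t * \<psi> (x / t))"
    unfolding U_op_def by (intro Bochner_Integration.integral_cong refl) (simp add: indicator_def)
  also have "\<dots> = (LINT r|lborel. indicator {0..} r * (indicator {0..} (x - exp r) * f (exp r) * \<psi> (x / exp r)))"
    by (subst haar1_integral) simp_all
  finally show ?thesis .
qed

lemma U_op_meas:
  fixes \<psi> f :: "real \<Rightarrow> complex"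
  assumes [measurable]: "\<psi> \<in> borel_measurable borel" "f \<in> borel_measurable borel"
  shows "U_op \<psi> f \<in> borel_measurable borel"
proof -
  have "(\<lambda>(x,r). indicator {0..} r * (indicator {0..} (x - exp r) * f (exp r) * \<psi> (x / exp r))) \<in> borel_measurable (borel \<Otimes>\<^sub>M borel)"
    by measurable
  then have M: "(\<lambda>(x,r). indicator {0..} r * (indicator {0..} (x - exp r) * f (exp r) * \<psi> (x / exp r))) \<in> borel_measurable (borel \<Otimes>\<^sub>M lborel)"
    by (simp only: pair_borel_lborel)
  have "U_op \<psi> f = (\<lambda>x. LINT r|lborel. indicator {0..} r * (indicator {0..} (x - exp r) * f (exp r) * \<psi> (x / exp r)))"
    by (rule ext) (rule U_op_alt[OF assms])
  then show ?thesis using lborel.borel_measurable_lebesgue_integral[OF M] by simp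
qed

lemma U_op_exp:
  fixes \<psi> f :: "real \<Rightarrow> complex"
  assumes [measurable]: "\<psi> \<in> borel_measurable borel" "f \<in> borel_measurable borel"
  shows "U_op \<psi> f (exp y) = (LINT r|lborel. indicator {0..} r * f (exp r) * (indicator {0..} (y - r) * \<psi> (exp (y - r))))"
  unfolding U_op_alt[OF assms]
  by (intro Bochner_Integration.integral_cong refl) (auto simp: indicator_def exp_diff)

lemma mconv_alt:
  fixes g h :: "real \<Rightarrow> complex"
  assumes [measurable]: "g \<in> borel_measurable borel" "h \<in> borel_measurable borel"
  shows "mconv g h x = (LINT r|lborel. g (x / exp r) * h (exp r))"
  unfolding mconv_def by (subst haar_integral) simp_all

lemma mconv_meas:
  fixes g h :: "real \<Rightarrow> complex"
  assumes [measurable]: "g \<in> borel_measurable borel" "h \<in> borel_measurable borel"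
  shows "mconv g h \<in> borel_measurable borel"
proof -
  have "(\<lambda>(x,r). g (x / exp r) * h (exp r)) \<in> borel_measurable (borel \<Otimes>\<^sub>M borel)"
    by measurable
  then have M: "(\<lambda>(x,r). g (x / exp r) * h (exp r)) \<in> borel_measurable (borel \<Otimes>\<^sub>M lborel)"
    by (simp only: pair_borel_lborel)
  have "mconv g h = (\<lambda>x. LINT r|lborel. g (x / exp r) * h (exp r))"
    by (rule ext) (rule mconv_alt[OF assms])
  then show ?thesis using lborel.borel_measurable_lebesgue_integral[OF M] by simp
qed

lemma psi_tilde_meas[measurable]:
  fixes \<psi> :: "real \<Rightarrow> complex"
  assumes [measurable]: "\<psi> \<in> borel_measurable borel"
  shows "psi_tilde \<psi> \<in> borel_measurable borel"
proof -
  have "psi_tilde \<psi> = (\<lambda>t. indicator {1..} t * \<psi> t)" by (rule ext) (simp add: psi_tilde_def indicator_def)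
  also have "\<dots> \<in> borel_measurable borel" by measurable
  finally show ?thesis .
qed

lemma mconv_exp:
  fixes F \<psi> :: "real \<Rightarrow> complex"
  assumes [measurable]: "F \<in> borel_measurable borel" "\<psi> \<in> borel_measurable borel"
  shows "mconv F (psi_tilde \<psi>) (exp y) = (LINT r|lborel. F (exp (y - r)) * (indicator {0..} r * \<psi> (exp r)))"
  unfolding mconv_alt[OF assms(1) psi_tilde_meas[OF assms(2)]]
  by (intro Bochner_Integration.integral_cong refl) (auto simp: indicator_def exp_diff psi_tilde_def)

theorem theorem3p5:
  fixes \<psi> f F :: "real \<Rightarrow> complex" and \<eta> :: "nat filter" and u :: real
  assumes "integrable haar1 \<psi>"
    and "Linf1 f"
    and "free_uf \<eta>" and "0 \<le> u" and "u < 1"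
    and "ext_rep f (\<eta>, u) F"
  shows "ext_rep (U_op \<psi> f) (\<eta>, u) (mconv F (psi_tilde \<psi>))"
proof -
  note psi = assms(1) and Lf = assms(2) and free = assms(3) and u = assms(4,5) and E = assms(6)
  let ?\<Phi> = "omega_filter (\<eta>, u)"
  let ?U = "U_op \<psi> f" and ?H = "mconv F (psi_tilde \<psi>)"
  have \<psi>m[measurable]: "\<psi> \<in> borel_measurable borel" by (rule integrable_haar1_meas[OF psi])
  have fm[measurable]: "f \<in> borel_measurable borel" using Lf by (simp add: Linf1_def)
  have Fm[measurable]: "F \<in> borel_measurable borel" using E by (simp add: ext_rep_def)
  have Um[measurable]: "?U \<in> borel_measurable borel" by (rule U_op_meas) simp_all
  have Hm[measurable]: "?H \<in> borel_measurable borel" by (rule mconv_meas) simp_all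
  obtain C0 where C0: "AE t in haar1. norm (f t) \<le> C0" using Lf by (auto simp: Linf1_def)
  define C where "C = max C0 0"
  have C: "0 \<le> C" by (simp add: C_def)
  have abnd: "AE y in lborel. 0 \<le> y \<longrightarrow> norm (f (exp y)) \<le> C"
  proof -
    have "AE y in lborel. 0 \<le> y \<longrightarrow> norm (f (exp y)) \<le> C0" using C0 by (subst (asm) haar1_AE) simp_all
    then show ?thesis by eventually_elim (auto simp: C_def)
  qed
  define p where "p r = indicator {0..} r * \<psi> (exp r)" for r
  have p: "integrable lborel p" using psi unfolding p_def by (subst (asm) haar1_integrable) simp_all
  have pm[measurable]: "p \<in> borel_measurable borel" unfolding p_def by simp
  have p0: "\<And>y. y < 0 \<Longrightarrow> p y = 0" by (simp add: p_def)
  note S1 = step1[OF free u fm abnd C E]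
  have Fb: "AE y in lborel. norm (F (exp y)) \<le> C" by (rule S1(1))
  have Uexp: "?U (exp y) = (LINT r|lborel. indicator {0..} r * f (exp r) * p (y - r))" for y
    unfolding U_op_exp[OF \<psi>m fm] p_def ..
  have Hexp: "?H (exp y) = (LINT r|lborel. F (exp (y - r)) * p r)" for y
    unfolding mconv_exp[OF Fm \<psi>m] p_def ..
  have WU: "((\<lambda>s. LINT t|lborel. indicator {-s..} t * ?U (exp (s + t)) * k t) \<longlongrightarrow> (LINT t|lborel. ?H (exp t) * k t)) ?\<Phi>"
    if k: "integrable lborel k" for k
  proof -
    have c: "((\<lambda>s. LINT t|lborel. indicator {-s..} t * (LINT r|lborel. indicator {0..} r * f (exp r) * p (s + t - r)) * k t)
           \<longlongrightarrow> (LINT t|lborel. (LINT r|lborel. F (exp (t - r)) * p r) * k t)) ?\<Phi>"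
    proof (rule core[where a="\<lambda>y. f (exp y)" and Fo="\<lambda>y. F (exp y)" and p=p and C=C and k=k and \<Phi>="?\<Phi>"])
      show "(\<lambda>y. f (exp y)) \<in> borel_measurable borel" by simp
      show "(\<lambda>y. F (exp y)) \<in> borel_measurable borel" by simp
      show "integrable lborel p" by (rule p)
      show "\<And>y. y < 0 \<Longrightarrow> p y = 0" by (rule p0)
      show "AE y in lborel. 0 \<le> y \<longrightarrow> norm (f (exp y)) \<le> C" by (rule abnd)
      show "AE y in lborel. norm (F (exp y)) \<le> C" by (rule Fb)
      show "0 \<le> C" by (rule C)
      show "integrable lborel k" by (rule k)
      show "((\<lambda>s. LINT t|lborel. indicator {-s..} t * f (exp (s + t)) * k t) \<longlongrightarrow> (LINT t|lborel. F (exp t) * k t)) ?\<Phi>"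
        if "integrable lborel k" for k
        by (rule S1(2)[OF that])
    qed
    show ?thesis using c by (simp only: Uexp[symmetric] Hexp[symmetric])
  qed
  define P where "P = (LINT r|lborel. norm (p r))"
  have Hb: "norm (?H x) \<le> C * P" if "0 < x" for x
  proof -
    have ae: "AE r in lborel. norm (F (exp (ln x - r))) \<le> C"
      by (rule lborel_AE_reflect[OF _ Fb]) measurable
    have "norm (LINT r|lborel. F (exp (ln x - r)) * p r) \<le> C * P"
      unfolding P_def by (rule bdd_mult_integrable(2)[OF _ ae p]) simp
    then show ?thesis using Hexp[of "ln x"] that by simp
  qed
  have claim: "((\<lambda>s. LINT t|haar1. ?U (exp (s - real N) * t) * \<phi> t) \<longlongrightarrow> (LINT t|haar1. ?H (exp (- real N) * t) * \<phi> t)) ?\<Phi>"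
    if \<phi>: "integrable haar1 \<phi>" for \<phi> N
  proof -
    have \<phi>m[measurable]: "\<phi> \<in> borel_measurable borel" by (rule integrable_haar1_meas[OF \<phi>])
    have i0: "integrable lborel (\<lambda>y. indicator {0..} y * \<phi> (exp y))" using \<phi> by (subst (asm) haar1_integrable) simp_all
    define k where "k z = indicator {- real N..} z * \<phi> (exp (real N + z))" for z
    have "integrable lborel (\<lambda>z. indicator {0..} (real N + z) * \<phi> (exp (real N + z)))"
      by (rule lborel_integrable_shift[THEN iffD2, OF i0])
    moreover have "k = (\<lambda>z. indicator {0..} (real N + z) * \<phi> (exp (real N + z)))"
      by (rule ext) (auto simp: k_def indicator_def)
    ultimately have ki: "integrable lborel k" by simp
    have e1: "(LINT t|haar1. ?U (exp (s - real N) * t) * \<phi> t) = (LINT z|lborel. indicator {-s..} z * ?U (exp (s + z)) * k z)"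
      if s: "real N \<le> s" for s
    proof -
      have "(LINT t|haar1. ?U (exp (s - real N) * t) * \<phi> t) = (LINT y|lborel. indicator {0..} y * (?U (exp (s - real N) * exp y) * \<phi> (exp y)))"
        by (subst haar1_integral) simp_all
      also have "\<dots> = (LINT z|lborel. indicator {0..} (real N + z) * (?U (exp (s - real N) * exp (real N + z)) * \<phi> (exp (real N + z))))"
        by (rule lborel_integral_shift)
      also have "\<dots> = (LINT z|lborel. indicator {-s..} z * ?U (exp (s + z)) * k z)"
      proof (intro Bochner_Integration.integral_cong refl)
        fix z
        have "exp (s - real N) * exp (real N + z) = exp (s + z)" by (simp add: exp_add[symmetric])
        then show "indicator {0..} (real N + z) * (?U (exp (s - real N) * exp (real N + z)) * \<phi> (exp (real N + z))) =
            indicator {-s..} z * ?U (exp (s + z)) * k z"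
          using s by (auto simp: k_def indicator_def)
      qed
      finally show ?thesis .
    qed
    have e2: "(LINT t|haar1. ?H (exp (- real N) * t) * \<phi> t) = (LINT z|lborel. ?H (exp z) * k z)"
    proof -
      have "(LINT t|haar1. ?H (exp (- real N) * t) * \<phi> t) = (LINT y|lborel. indicator {0..} y * (?H (exp (- real N) * exp y) * \<phi> (exp y)))"
        by (subst haar1_integral) simp_all
      also have "\<dots> = (LINT z|lborel. indicator {0..} (real N + z) * (?H (exp (- real N) * exp (real N + z)) * \<phi> (exp (real N + z))))"
        by (rule lborel_integral_shift)
      also have "\<dots> = (LINT z|lborel. ?H (exp z) * k z)"
      proof (intro Bochner_Integration.integral_cong refl)
        fix z
        have "exp (- real N) * exp (real N + z) = exp z" by (simp add: exp_add[symmetric])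
        then show "indicator {0..} (real N + z) * (?H (exp (- real N) * exp (real N + z)) * \<phi> (exp (real N + z))) =
            ?H (exp z) * k z"
          by (auto simp: k_def indicator_def)
      qed
      finally show ?thesis .
    qed
    have ev: "eventually (\<lambda>s. (LINT z|lborel. indicator {-s..} z * ?U (exp (s + z)) * k z) = (LINT t|haar1. ?U (exp (s - real N) * t) * \<phi> t)) ?\<Phi>"
      using Phi_ge[OF free u(1), of "real N"] by eventually_elim (rule e1[symmetric])
    show ?thesis unfolding e2 using tendsto_cong[OF ev] WU[OF ki] by simp
  qed
  have LinfH: "Linf1 ?H"
  proof -
    have "AE t in haar1. norm (?H t) \<le> C * P"
      by (subst haar1_AE) (auto intro!: Hb)
    then show ?thesis unfolding Linf1_def using Hm by blast
  qed
  have W0: "wlim_rep ?U (\<eta>, u) ?H"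
    unfolding wlim_rep_def
  proof (intro conjI allI impI LinfH)
    fix \<phi> :: "real \<Rightarrow> complex" assume "integrable haar1 \<phi>"
    from claim[OF this, of 0]
    show "((\<lambda>s. LINT t|haar1. ?U (exp s * t) * \<phi> t) \<longlongrightarrow> (LINT t|haar1. ?H t * \<phi> t)) ?\<Phi>" by simp
  qed
  have WN: "wlim_rep ?U (tau_s (- real N) (\<eta>, u)) (\<lambda>t. ?H (exp (- real N) * t))" for N
    unfolding wlim_rep_def
  proof (intro conjI allI impI)
    show "Linf1 (\<lambda>t. ?H (exp (- real N) * t))"
    proof -
      have "AE t in haar1. norm (?H (exp (- real N) * t)) \<le> C * P"
        by (subst haar1_AE) (auto intro!: Hb)
      moreover have "(\<lambda>t. ?H (exp (- real N) * t)) \<in> borel_measurable borel" by measurable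
      ultimately show ?thesis unfolding Linf1_def by blast
    qed
    fix \<phi> :: "real \<Rightarrow> complex" assume "integrable haar1 \<phi>"
    from claim[OF this, of N]
    show "((\<lambda>s. LINT t|haar1. ?U (exp s * t) * \<phi> t) \<longlongrightarrow> (LINT t|haar1. ?H (exp (- real N) * t) * \<phi> t))
        (omega_filter (tau_s (- real N) (\<eta>, u)))"
      by (rule tendsto_shiftN[OF free u, THEN iffD2])
  qed
  show ?thesis
    unfolding ext_rep_def
  proof (intro conjI allI impI)
    show "?H \<in> borel_measurable borel" by simp
    show "\<exists>h. wlim_rep ?U (\<eta>, u) h \<and> (AE x in haar. 1 \<le> x \<longrightarrow> ?H x = h x)"
      using W0 by auto
    fix N :: nat assume "0 < N"
    have "?H x = ?H (exp (- real N) * (exp (real N) * x))" for x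
      by (simp add: mult.assoc[symmetric] exp_add[symmetric])
    then show "\<exists>G. wlim_rep ?U (tau_s (- real N) (\<eta>, u)) G \<and>
         (AE x in haar. exp (- real N) \<le> x \<and> x \<le> 1 \<longrightarrow> ?H x = G (exp (real N) * x))"
      using WN[of N] by (intro exI[of _ "\<lambda>t. ?H (exp (- real N) * t)"]) auto
  qed
qed

end
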